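(* Let $m\ge3$ be odd, $n\ge 2$, and let $\mathcal{A}$ be a real symmetric $m$th order $n$-dimensional tensor. If $\mathcal{A}$ is strongly positive semi-definite, then $\mathcal{A}$ is genuinely positive semi-definite. If furthermore $\mathcal{A}$ is strongly positive definite, then $\mathcal{A}$ is genuinely positive definite.
   Context: For $\mathbf{x}\in\mathbb{R}^n$, $\mathcal{A}\mathbf{x}^{m-1}$ is the vector with $i$th component $\sum_{i_2,\dots,i_m=1}^n a_{ii_2\dots i_m}x_{i_2}\cdots x_{i_m}$, and $\mathbf{x}^{[m-1]}=(x_i^{m-1})_i$. $\mathcal{A}$ is strongly positive semi-definite if $\mathcal{A}\mathbf{x}^{m-1}\ge\mathbf{0}$ componentwise for all $\mathbf{x}\in\mathbb{R}^n$, and strongly positive definite if $\mathcal{A}\mathbf{x}^{m-1}>\mathbf{0}$ componentwise for all nonzero $\mathbf{x}$. A real $\lambda$ is an H-eigenvalue of $\mathcal{A}$ if there is a nonzero $\mathbf{x}\in\mathbb{R}^n$ with $\mathcal{A}\mathbf{x}^{m-1}=\lambda\mathbf{x}^{[m-1]}$. A tensor is genuinely positive semi-definite (resp. genuinely positive definite) if its symmetrization (here $\mathcal{A}$ itself) has at least one H-eigenvalue and all its H-eigenvalues are nonnegative (resp. positive). *)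

theory Defs
  imports Complex_Main "HOL-Combinatorics.Permutations"
begin

text \<open>An m-th order tensor over the finite index type 'n (dimension n = CARD('n))
  is a function A from index lists to reals; only lists of length m are relevant:
  the entry a_{i_1 ... i_m} is A [i_1, ..., i_m].\<close>

definition symmetric_tensor :: "nat \<Rightarrow> ('n list \<Rightarrow> real) \<Rightarrow> bool" where
  "symmetric_tensor m A \<longleftrightarrow>
     (\<forall>is js. length is = m \<and> mset is = mset js \<longrightarrow> A is = A js)"

definition symmetrization :: "nat \<Rightarrow> ('n list \<Rightarrow> real) \<Rightarrow> ('n list \<Rightarrow> real)" where
  "symmetrization m A = (\<lambda>is.
     (\<Sum>p\<in>{p. p permutes {..<m}}. A (permute_list p is)) / fact m)"

definition tensor_apply :: "nat \<Rightarrow> ('n::finite list \<Rightarrow> real) \<Rightarrow> ('n \<Rightarrow> real) \<Rightarrow> 'n \<Rightarrow> real" where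
  "tensor_apply m A x i =
     (\<Sum>js\<in>{js. length js = m - 1}. A (i # js) * prod_list (map x js))"

definition strongly_psd :: "nat \<Rightarrow> ('n::finite list \<Rightarrow> real) \<Rightarrow> bool" where
  "strongly_psd m A \<longleftrightarrow> (\<forall>x i. tensor_apply m A x i \<ge> 0)"

definition strongly_pd :: "nat \<Rightarrow> ('n::finite list \<Rightarrow> real) \<Rightarrow> bool" where
  "strongly_pd m A \<longleftrightarrow> (\<forall>x. (\<exists>j. x j \<noteq> 0) \<longrightarrow> (\<forall>i. tensor_apply m A x i > 0))"

definition H_eigenvalue :: "nat \<Rightarrow> ('n::finite list \<Rightarrow> real) \<Rightarrow> real \<Rightarrow> bool" where
  "H_eigenvalue m A lam \<longleftrightarrow>
     (\<exists>x. (\<exists>j. x j \<noteq> 0) \<and> (\<forall>i. tensor_apply m A x i = lam * x i ^ (m - 1)))"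

definition genuinely_psd :: "nat \<Rightarrow> ('n::finite list \<Rightarrow> real) \<Rightarrow> bool" where
  "genuinely_psd m A \<longleftrightarrow>
     (let S = symmetrization m A in
       (\<exists>lam. H_eigenvalue m S lam) \<and> (\<forall>lam. H_eigenvalue m S lam \<longrightarrow> lam \<ge> 0))"

definition genuinely_pd :: "nat \<Rightarrow> ('n::finite list \<Rightarrow> real) \<Rightarrow> bool" where
  "genuinely_pd m A \<longleftrightarrow>
     (let S = symmetrization m A in
       (\<exists>lam. H_eigenvalue m S lam) \<and> (\<forall>lam. H_eigenvalue m S lam \<longrightarrow> lam > 0))"

end

theory Submission
  imports Defs "HOL-Analysis.Analysis"
begin

lemma finite_len: "finite {js :: 'n::finite list. length js = k}"
  using finite_lists_length_eq[of "UNIV :: 'n set" k] by simp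

lemma cont_prod_list:
  "continuous_on S (\<lambda>v::real^'n. prod_list (map (\<lambda>j. v $ j) js))"
  by (induction js) (auto intro!: continuous_intros)

lemma cont_T:
  "continuous_on S (\<lambda>v::real^'n::finite. tensor_apply m B (\<lambda>j. v $ j) i)"
  unfolding tensor_apply_def
  by (intro continuous_on_sum continuous_on_mult continuous_on_const cont_prod_list)

definition simplex_set :: "(real^'n::finite) set" where
  "simplex_set = {v. (\<forall>i. 0 \<le> v $ i) \<and> sum (\<lambda>i. v $ i) UNIV = 1}"

lemma simplex_compact: "compact (simplex_set :: (real^'n::finite) set)"
proof (subst compact_eq_bounded_closed, intro conjI)
  show "bounded (simplex_set :: (real^'n) set)"
    unfolding bounded_iff
  proof (intro exI ballI)
    fix v :: "real^'n" assume "v \<in> simplex_set"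
    then have "norm v \<le> sum (\<lambda>i. \<bar>v$i\<bar>) UNIV" using norm_le_l1_cart by blast
    also have "\<dots> = 1" using \<open>v \<in> simplex_set\<close> by (simp add: simplex_set_def)
    finally show "norm v \<le> 1" .
  qed
  have "simplex_set = (\<Inter>i. {v::real^'n. 0 \<le> v $ i}) \<inter> {v. sum (\<lambda>i. v $ i) UNIV = 1}"
    by (auto simp: simplex_set_def)
  also have "closed \<dots>"
    by (intro closed_Int closed_INT ballI closed_Collect_le closed_Collect_eq
        continuous_intros continuous_on_sum)
  finally show "closed (simplex_set :: (real^'n) set)" .
qed

lemma simplex_convex: "convex (simplex_set :: (real^'n::finite) set)"
  unfolding convex_def simplex_set_def
  by (auto simp: sum.distrib sum_distrib_left[symmetric])

lemma simplex_ne: "(\<chi> i. 1 / real CARD('n)) \<in> (simplex_set :: (real^'n::finite) set)"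
  by (simp add: simplex_set_def)

lemma exists_eig:
  fixes B :: "'n::finite list \<Rightarrow> real"
  assumes k: "m \<ge> 2"
    and nn: "\<And>v i. v \<in> simplex_set \<Longrightarrow> tensor_apply m B (\<lambda>j. v $ j) i \<ge> 0"
  shows "\<exists>lam. H_eigenvalue m B lam"
proof (cases "\<exists>v\<in>simplex_set. \<forall>i. tensor_apply m B (\<lambda>j. v $ j) i = 0")
  case True
  then obtain v where v: "v \<in> simplex_set" "\<forall>i. tensor_apply m B (\<lambda>j. v $ j) i = 0" by blast
  have "\<exists>j. v $ j \<noteq> 0"
  proof (rule ccontr)
    assume "\<not> ?thesis"
    then have "sum (\<lambda>i. v $ i) UNIV = 0" by simp
    with v(1) show False by (simp add: simplex_set_def)
  qed
  then show ?thesis unfolding H_eigenvalue_def using v(2) by (intro exI[of _ 0]) auto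
next
  case False
  define T where "T v i = tensor_apply m B (\<lambda>j. v $ j) i" for v :: "real^'n" and i
  define r where "r v i = root (m - 1) (T v i)" for v i
  define s where "s v = sum (r v) UNIV" for v
  have spos: "s v > 0" if "v \<in> simplex_set" for v
  proof -
    from False that obtain i where "T v i \<noteq> 0" unfolding T_def by blast
    with nn[OF that, of i] have "T v i > 0" unfolding T_def by auto
    then have "r v i > 0" unfolding r_def using k by simp
    moreover have "\<forall>j. r v j \<ge> 0" unfolding r_def T_def using nn[OF that] by (simp add: real_root_ge_zero)
    ultimately have "r v i \<le> s v" "0 < r v i" unfolding s_def
      by (auto intro: member_le_sum)
    then show ?thesis by linarith
  qed
  define f where "f v = (\<chi> i. r v i / s v)" for v :: "real^'n"
  have contr: "continuous_on simplex_set (\<lambda>v. r v i)" for i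
    unfolding r_def T_def by (intro continuous_intros cont_T)
  have conts: "continuous_on simplex_set s"
    unfolding s_def by (intro continuous_on_sum contr)
  have "continuous_on simplex_set f"
    unfolding f_def
    by (intro continuous_on_vec_lambda continuous_on_divide contr conts) (use spos in force)
  moreover have "f \<in> simplex_set \<rightarrow> simplex_set"
  proof
    fix v :: "real^'n" assume v: "v \<in> simplex_set"
    have "\<forall>j. r v j \<ge> 0" unfolding r_def T_def using nn[OF v] by (simp add: real_root_ge_zero)
    moreover have "sum (\<lambda>i. r v i / s v) UNIV = 1"
      using spos[OF v] by (simp add: sum_divide_distrib[symmetric] s_def)
    ultimately show "f v \<in> simplex_set" using spos[OF v]
      by (simp add: f_def simplex_set_def)
  qed
  ultimately obtain v where v: "v \<in> simplex_set" "f v = v"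
    using brouwer[OF simplex_compact simplex_convex, of f] simplex_ne by blast
  have "\<exists>j. v $ j \<noteq> 0"
  proof (rule ccontr)
    assume "\<not> ?thesis"
    then have "sum (\<lambda>i. v $ i) UNIV = 0" by simp
    with v(1) show False by (simp add: simplex_set_def)
  qed
  moreover have "T v i = s v ^ (m - 1) * (v $ i) ^ (m - 1)" for i
  proof -
    have vi: "v $ i = r v i / s v" using v(2) by (metis f_def vec_lambda_beta)
    have "T v i \<ge> 0" unfolding T_def using nn[OF v(1)] by simp
    then have "r v i ^ (m - 1) = T v i" unfolding r_def using k by simp
    then show ?thesis using vi spos[OF v(1)] by (simp add: power_divide)
  qed
  ultimately show ?thesis unfolding H_eigenvalue_def T_def
    by (intro exI[of _ "s v ^ (m - 1)"] exI[of _ "\<lambda>j. v $ j"]) auto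
qed


lemma sym_eq:
  assumes "symmetric_tensor m A" and "length is = m"
  shows "symmetrization m A is = A is"
proof -
  have "A (permute_list p is) = A is" if "p permutes {..<m}" for p
    using assms that unfolding symmetric_tensor_def
    by (metis length_permute_list mset_permute_list)
  then have "(\<Sum>p\<in>{p. p permutes {..<m}}. A (permute_list p is)) = (\<Sum>p\<in>{p. p permutes {..<m}}. A is)"
    by (intro sum.cong) auto
  also have "\<dots> = fact m * A is" using card_permutations[of "{..<m}" m] by simp
  finally show ?thesis unfolding symmetrization_def by simp
qed

lemma tapp_eq:
  assumes "symmetric_tensor m A" and "m \<ge> 1"
  shows "tensor_apply m (symmetrization m A) = tensor_apply m A"
  unfolding tensor_apply_def
proof (intro ext sum.cong refl)
  fix x i js assume "js \<in> {js :: 'a list. length js = m - 1}"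
  then have "length (i # js) = m" using assms(2) by auto
  then show "symmetrization m A (i # js) * prod_list (map x js) = A (i # js) * prod_list (map x js)"
    using sym_eq[OF assms(1)] by simp
qed

lemma even_pow_pos: "even k \<Longrightarrow> (x::real) \<noteq> 0 \<Longrightarrow> x ^ k > 0"
  by (simp add: zero_less_power_eq)

lemma tapp_zero:
  assumes "m \<ge> 2"
  shows "tensor_apply m A (\<lambda>_. 0) i = 0"
  unfolding tensor_apply_def
proof (intro sum.neutral ballI)
  fix js :: "'a list" assume "js \<in> {js. length js = m - 1}"
  then have "js \<noteq> []" using assms by auto
  then show "A (i # js) * prod_list (map (\<lambda>_. 0::real) js) = 0"
    by (cases js) auto
qed

theorem theorem3p3:
  fixes m :: nat and A :: "'n::finite list \<Rightarrow> real"
  assumes "odd m" and "m \<ge> 3" and "card (UNIV :: 'n set) \<ge> 2"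
    and "symmetric_tensor m A"
  shows "(strongly_psd m A \<longrightarrow> genuinely_psd m A)
       \<and> (strongly_pd m A \<longrightarrow> genuinely_pd m A)"
proof -
  define S where "S = symmetrization m A"
  have TS: "tensor_apply m S = tensor_apply m A"
    unfolding S_def using tapp_eq[OF assms(4)] assms(2) by simp
  have ev: "even (m - 1)" using assms by simp
  have psd_pd: "strongly_psd m A" if "strongly_pd m A"
    unfolding strongly_psd_def
  proof (intro allI)
    fix x i
    show "tensor_apply m A x i \<ge> 0"
    proof (cases "\<exists>j. x j \<noteq> 0")
      case True then show ?thesis using that unfolding strongly_pd_def
        by (meson less_imp_le)
    next
      case False
      then have "x = (\<lambda>_. 0)" by auto
      then show ?thesis using tapp_zero[of m A i] assms by simp
    qed
  qed
  have ex: "\<exists>lam. H_eigenvalue m S lam" if "strongly_psd m A"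
    by (rule exists_eig) (use assms that TS in \<open>auto simp: strongly_psd_def\<close>)
  have nonneg: "lam \<ge> 0" if h: "strongly_psd m A" "H_eigenvalue m S lam" for lam
  proof -
    obtain x j where x: "x j \<noteq> 0" "\<forall>i. tensor_apply m S x i = lam * x i ^ (m - 1)"
      using h(2) unfolding H_eigenvalue_def by blast
    have p: "x j ^ (m - 1) > 0" using even_pow_pos[OF ev x(1)] .
    have "lam * x j ^ (m - 1) \<ge> 0" using h(1) x(2) TS unfolding strongly_psd_def by metis
    with p show ?thesis by (simp add: zero_le_mult_iff)
  qed
  have pos: "lam > 0" if h: "strongly_pd m A" "H_eigenvalue m S lam" for lam
  proof -
    obtain x j where x: "x j \<noteq> 0" "\<forall>i. tensor_apply m S x i = lam * x i ^ (m - 1)"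
      using h(2) unfolding H_eigenvalue_def by blast
    have p: "x j ^ (m - 1) > 0" using even_pow_pos[OF ev x(1)] .
    have "lam * x j ^ (m - 1) > 0" using h(1) x TS unfolding strongly_pd_def by metis
    with p assms(1) show ?thesis by (simp add: zero_less_mult_iff)
  qed
  show ?thesis
    unfolding genuinely_psd_def genuinely_pd_def Let_def S_def[symmetric]
    using ex nonneg pos psd_pd by blast
qed

end
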